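(* Let $R$ be a reduced commutative ring and let $I$ be a pure ideal of $R$. Then $R$ is Gaussian if and only if $R\bowtie I$ is Gaussian.
   Context: All rings are commutative with identity. For an ideal $I$ of $R$, $R\bowtie I=\{(r,r+i): r\in R,\ i\in I\}$ is a subring of $R\times R$ (componentwise operations, unit $(1,1)$). An ideal $I$ is pure if $R/I$ is a flat $R$-module. A ring $A$ is Gaussian if $c(fg)=c(f)c(g)$ for all $f,g\in A[X]$, where $c(f)$ is the ideal of $A$ generated by the coefficients of $f$. *)

theory Defs
  imports "HOL-Algebra.UnivPoly" "HOL-Algebra.Ideal_Product" "HOL-Algebra.QuotRing"
          "HOL-Algebra.Module"
begin

definition reduced_ring :: "('a, 'b) ring_scheme \<Rightarrow> bool" where
  "reduced_ring R \<longleftrightarrow> (\<forall>x \<in> carrier R. \<forall>n::nat. x [^]\<^bsub>R\<^esub> n = \<zero>\<^bsub>R\<^esub> \<longrightarrow> x = \<zero>\<^bsub>R\<^esub>)"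

text \<open>Flatness of an R-module M over R, defined by the equational
  criterion: every relation among elements of M is a consequence of relations in R.\<close>
definition flat_module :: "('a, 'c) ring_scheme \<Rightarrow> ('a, 'b) module \<Rightarrow> bool" where
  "flat_module R M \<longleftrightarrow>
    (\<forall>(n::nat) (a :: nat \<Rightarrow> 'a) (x :: nat \<Rightarrow> 'b).
       (\<forall>i<n. a i \<in> carrier R \<and> x i \<in> carrier M) \<and>
       finsum M (\<lambda>i. a i \<odot>\<^bsub>M\<^esub> x i) {..<n} = \<zero>\<^bsub>M\<^esub>
       \<longrightarrow> (\<exists>(m::nat) (b :: nat \<Rightarrow> nat \<Rightarrow> 'a) (y :: nat \<Rightarrow> 'b).
             (\<forall>j<m. y j \<in> carrier M) \<and>
             (\<forall>i<n. \<forall>j<m. b i j \<in> carrier R) \<and>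
             (\<forall>i<n. x i = finsum M (\<lambda>j. b i j \<odot>\<^bsub>M\<^esub> y j) {..<m}) \<and>
             (\<forall>j<m. finsum R (\<lambda>i. a i \<otimes>\<^bsub>R\<^esub> b i j) {..<n} = \<zero>\<^bsub>R\<^esub>)))"

text \<open>The quotient R/I viewed as an R-module (scalar action r.(I+x) = I+(r x)).\<close>
definition quot_module :: "('a, 'b) ring_scheme \<Rightarrow> 'a set \<Rightarrow> ('a, 'a set) module" where
  "quot_module R I =
     \<lparr> carrier = a_rcosets\<^bsub>R\<^esub> I,
       mult = rcoset_mult R I,
       one = I +>\<^bsub>R\<^esub> \<one>\<^bsub>R\<^esub>,
       zero = I,
       add = set_add R,
       smult = (\<lambda>r X. rcoset_mult R I (I +>\<^bsub>R\<^esub> r) X) \<rparr>"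

definition pure_ideal :: "('a, 'b) ring_scheme \<Rightarrow> 'a set \<Rightarrow> bool" where
  "pure_ideal R I \<longleftrightarrow> ideal I R \<and> flat_module R (quot_module R I)"

definition amalg_dup :: "('a, 'b) ring_scheme \<Rightarrow> 'a set \<Rightarrow> ('a \<times> 'a) ring" where
  "amalg_dup R I =
     \<lparr> carrier = {(r, r \<oplus>\<^bsub>R\<^esub> i) | r i. r \<in> carrier R \<and> i \<in> I},
       mult = (\<lambda>(a, b) (c, d). (a \<otimes>\<^bsub>R\<^esub> c, b \<otimes>\<^bsub>R\<^esub> d)),
       one = (\<one>\<^bsub>R\<^esub>, \<one>\<^bsub>R\<^esub>),
       zero = (\<zero>\<^bsub>R\<^esub>, \<zero>\<^bsub>R\<^esub>),
       add = (\<lambda>(a, b) (c, d). (a \<oplus>\<^bsub>R\<^esub> c, b \<oplus>\<^bsub>R\<^esub> d)) \<rparr>"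

definition content :: "('a, 'b) ring_scheme \<Rightarrow> (nat \<Rightarrow> 'a) \<Rightarrow> 'a set" where
  "content A f = Idl\<^bsub>A\<^esub> (range (coeff (UP A) f))"

definition gaussian_ring :: "('a, 'b) ring_scheme \<Rightarrow> bool" where
  "gaussian_ring A \<longleftrightarrow>
    (\<forall>f \<in> carrier (UP A). \<forall>g \<in> carrier (UP A).
       content A (f \<otimes>\<^bsub>UP A\<^esub> g) = ideal_prod A (content A f) (content A g))"

end

theory Submission
  imports Defs
begin


lemma quot_module_finsum:
  "finsum (quot_module R I) f A = finsum (R Quot I) f A"
  by (simp add: finsum_def finprod_def quot_module_def FactRing_def)

lemma FactRing_carrier: "carrier (R Quot I) = a_rcosets\<^bsub>R\<^esub> I"
  by (simp add: FactRing_def)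

lemma qm_carrier: "carrier (quot_module R I) = a_rcosets\<^bsub>R\<^esub> I"
  by (simp add: quot_module_def)
lemma qm_zero: "zero (quot_module R I) = I"
  by (simp add: quot_module_def)
lemma qm_smult: "smult (quot_module R I) r X = rcoset_mult R I (I +>\<^bsub>R\<^esub> r) X"
  by (simp add: quot_module_def)

lemma lt1: "{..<(1::nat)} = {0}" by auto

lemma pure_local_unit:
  fixes R (structure)
  assumes cr: "cring R" and pu: "pure_ideal R I" and uI: "u \<in> I"
  shows "\<exists>e\<in>I. u \<otimes>\<^bsub>R\<^esub> e = u"
proof -
  interpret cring R by (rule cr)
  have id: "ideal I R" using pu by (simp add: pure_ideal_def)
  interpret ideal I R by (rule id)
  have fl: "flat_module R (quot_module R I)" using pu by (simp add: pure_ideal_def)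
  let ?M = "quot_module R I"
  have uc: "u \<in> carrier R" using uI by auto
  have Q: "ring_hom_ring R (R Quot I) (a_r_coset R I)" by (rule rcos_ring_hom_ring)
  have x0: "I +> \<one> \<in> carrier ?M"
    unfolding qm_carrier by (rule a_rcosetsI[OF a_subset one_closed])
  have sm: "smult ?M u (I +> \<one>) = I +> u"
    unfolding qm_smult using rcoset_mult_add[of u \<one>] uc by simp
  have Iu: "I +> u = I" using uI by (simp add: a_rcos_const)
  have z: "finsum ?M (\<lambda>i. smult ?M u (I +> \<one>)) {..<1::nat} = \<zero>\<^bsub>?M\<^esub>"
  proof -
    interpret Q: cring "R Quot I" by (rule quotient_is_cring) (rule cr)
    have "finsum ?M (\<lambda>i. smult ?M u (I +> \<one>)) {..<1::nat} = finsum (R Quot I) (\<lambda>i. I) {0::nat}"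
      unfolding quot_module_finsum sm Iu lt1 by simp
    also have "\<dots> = I"
    proof -
      have Ic: "I \<in> carrier (R Quot I)" using a_rcosetsI[OF a_subset uc] unfolding Iu FactRing_carrier .
      have "finsum (R Quot I) (\<lambda>i. I) (insert (0::nat) {}) = I \<oplus>\<^bsub>R Quot I\<^esub> finsum (R Quot I) (\<lambda>i. I) ({}::nat set)"
        by (rule Q.finsum_insert) (use Ic in auto)
      also have "\<dots> = I \<oplus>\<^bsub>R Quot I\<^esub> \<zero>\<^bsub>R Quot I\<^esub>" by (simp only: Q.finsum_empty)
      also have "\<dots> = I" by (rule Q.r_zero[OF Ic])
      finally show ?thesis by simp
    qed
    finally show ?thesis unfolding qm_zero .
  qed
  note imp = fl[unfolded flat_module_def, THEN spec[of _ 1], THEN spec[of _ "\<lambda>i. u"], THEN spec[of _ "\<lambda>i. I +> \<one>"]]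
  have pre: "(\<forall>i<1::nat. u \<in> carrier R \<and> I +> \<one> \<in> carrier ?M) \<and>
     finsum ?M (\<lambda>i. smult ?M u (I +> \<one>)) {..<1::nat} = \<zero>\<^bsub>?M\<^esub>"
    using uc x0 z by simp
  note ex = mp[OF imp pre]
  from ex obtain m b y where ym: "\<forall>j<(m::nat). y j \<in> carrier ?M"
    and bc: "\<forall>i<1::nat. \<forall>j<m. b i j \<in> carrier R"
    and xe: "\<forall>i<1::nat. I +> \<one> = finsum ?M (\<lambda>j. smult ?M (b i j) (y j)) {..<m}"
    and ab: "\<forall>j<m. finsum R (\<lambda>i. u \<otimes> b i j) {..<1::nat} = \<zero>"
    by (elim exE conjE) (erule that, assumption+)
  have "\<forall>j. \<exists>r. j < m \<longrightarrow> r \<in> carrier R \<and> y j = I +> r"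
  proof
    fix j show "\<exists>r. j < m \<longrightarrow> r \<in> carrier R \<and> y j = I +> r"
    proof (cases "j < m")
      case True
      hence "y j \<in> a_rcosets I" using ym unfolding qm_carrier by simp
      then show ?thesis unfolding A_RCOSETS_def' by blast
    qed simp
  qed
  hence "\<exists>r. \<forall>j. j < m \<longrightarrow> r j \<in> carrier R \<and> y j = I +> r j" by (rule choice)
  then obtain r where r0: "\<forall>j. j < m \<longrightarrow> r j \<in> carrier R \<and> y j = I +> r j" by (rule exE)
  have r: "\<And>j. j < m \<Longrightarrow> r j \<in> carrier R \<and> y j = I +> r j" using r0 by simp
  have ub: "\<And>j. j < m \<Longrightarrow> u \<otimes> b 0 j = \<zero>"
  proof -
    fix j assume j: "j < m"
    have bj: "b 0 j \<in> carrier R" using bc j by simp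
    have "finsum R (\<lambda>i. u \<otimes> b i j) {0::nat} = u \<otimes> b 0 j"
      using bj uc by (simp add: finsum_insert)
    thus "u \<otimes> b 0 j = \<zero>" using ab j unfolding lt1 by simp
  qed
  have bj: "\<And>j. j < m \<Longrightarrow> b 0 j \<in> carrier R" using bc by simp
  have rj: "\<And>j. j < m \<Longrightarrow> r j \<in> carrier R" using r by simp
  have fP: "(\<lambda>j. b 0 j \<otimes> r j) \<in> {..<m} \<rightarrow> carrier R" using bj rj by simp
  define s where "s = finsum R (\<lambda>j. b 0 j \<otimes> r j) {..<m}"
  have sc: "s \<in> carrier R" unfolding s_def using fP by (rule finsum_closed)
  interpret Q: cring "R Quot I" by (rule quotient_is_cring) (rule cr)
  have "I +> \<one> = finsum ?M (\<lambda>j. smult ?M (b 0 j) (y j)) {..<m}" using xe by simp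
  also have "\<dots> = finsum (R Quot I) (\<lambda>j. I +> (b 0 j \<otimes> r j)) {..<m}"
    unfolding quot_module_finsum
  proof (rule Q.add.finprod_cong')
    fix j assume "j \<in> {..<m}"
    hence j: "j < m" by simp
    show "smult ?M (b 0 j) (y j) = I +> (b 0 j \<otimes> r j)"
      unfolding qm_smult using r[OF j] bj[OF j] rcoset_mult_add[of "b 0 j" "r j"] by simp
  next
    show "(\<lambda>j. I +> (b 0 j \<otimes> r j)) \<in> {..<m} \<rightarrow> carrier (R Quot I)"
    proof
      fix j assume "j \<in> {..<m}"
      hence c: "b 0 j \<otimes> r j \<in> carrier R" using bj rj by simp
      show "I +> (b 0 j \<otimes> r j) \<in> carrier (R Quot I)"
        unfolding FactRing_carrier by (rule a_rcosetsI[OF a_subset c])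
    qed
  qed simp
  also have "\<dots> = I +> s"
    unfolding s_def using ring_hom_ring.hom_finsum[OF Q, OF fP] by (simp add: comp_def)
  finally have eq: "I +> \<one> = I +> s" .
  have "\<one> \<in> I +> s" using eq a_rcos_self[of \<one>] by simp
  then obtain i where iI: "i \<in> I" and ie: "\<one> = i \<oplus> s" by (auto simp: a_r_coset_def')
  have ic: "i \<in> carrier R" using iI by (rule Icarr)
  have "\<one> \<ominus> s = (i \<oplus> s) \<ominus> s" by (simp only: ie[symmetric])
  also have "\<dots> = i" using ic sc by (simp add: a_minus_def a_assoc r_neg)
  finally have ei: "\<one> \<ominus> s = i" .
  have "u \<otimes> s = finsum R (\<lambda>j. u \<otimes> (b 0 j \<otimes> r j)) {..<m}"
    unfolding s_def using finsum_rdistr[OF _ uc fP] by simp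
  also have "\<dots> = finsum R (\<lambda>j. \<zero>) {..<m}"
  proof (rule add.finprod_cong')
    fix j assume "j \<in> {..<m}"
    hence j: "j < m" by simp
    show "u \<otimes> (b 0 j \<otimes> r j) = \<zero>"
      using ub[OF j] bj[OF j] rj[OF j] uc by (simp add: m_assoc[symmetric])
  qed auto
  also have "\<dots> = \<zero>" by simp
  finally have us: "u \<otimes> s = \<zero>" .
  have "u \<otimes> (\<one> \<ominus> s) = u \<ominus> u \<otimes> s" using uc sc by algebra
  also have "\<dots> = u" unfolding us minus_eq using uc by simp
  finally have "u \<otimes> (\<one> \<ominus> s) = u" .
  hence "u \<otimes> i = u" unfolding ei .
  thus ?thesis by (rule bexI[OF _ iI])
qed




lemma (in ring) ideal_finsum:
  assumes J: "ideal J R" and fin: "finite S" and f: "\<And>i. i \<in> S \<Longrightarrow> f i \<in> J"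
  shows "finsum R f S \<in> J"
proof -
  interpret J: ideal J R by (rule J)
  show ?thesis using fin f
  proof (induction S rule: finite_induct)
    case empty
    then show ?case by (simp add: J.zero_closed)
  next
    case (insert x F)
    have "finsum R f (insert x F) = f x \<oplus> finsum R f F"
      using insert J.Icarr by (intro finsum_insert) auto
    moreover have "f x \<oplus> finsum R f F \<in> J"
      using insert by (simp add: J.a_closed)
    ultimately show ?case by simp
  qed
qed

lemma (in cring) mult_ideal:
  assumes J: "ideal J R" and t: "t \<in> carrier R"
  shows "ideal {x \<in> carrier R. x \<otimes> t \<in> J} R"
proof (rule idealI)
  show "ring R" ..
  interpret J: ideal J R by (rule J)
  have Jc: "\<And>a. a \<in> J \<Longrightarrow> a \<in> carrier R" by (rule J.Icarr)
  show "subgroup {x \<in> carrier R. x \<otimes> t \<in> J} (add_monoid R)"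
  proof (rule add.subgroupI)
    show "{x \<in> carrier R. x \<otimes> t \<in> J} \<subseteq> carrier R" by auto
    have "\<zero> \<otimes> t \<in> J" using t J by (simp add: J.zero_closed)
    thus "{x \<in> carrier R. x \<otimes> t \<in> J} \<noteq> {}" by blast
  next
    fix a assume a: "a \<in> {x \<in> carrier R. x \<otimes> t \<in> J}"
    hence "(\<ominus> a) \<otimes> t = \<ominus> (a \<otimes> t)" using t by (simp add: l_minus)
    moreover have "\<ominus> (a \<otimes> t) \<in> J" using a J by (simp add: J.a_inv_closed)
    ultimately show "\<ominus> a \<in> {x \<in> carrier R. x \<otimes> t \<in> J}"
      using a by simp
  next
    fix a b assume a: "a \<in> {x \<in> carrier R. x \<otimes> t \<in> J}" and b: "b \<in> {x \<in> carrier R. x \<otimes> t \<in> J}"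
    hence "(a \<oplus> b) \<otimes> t = a \<otimes> t \<oplus> b \<otimes> t" using t by (simp add: l_distr)
    moreover have "a \<otimes> t \<oplus> b \<otimes> t \<in> J" using a b J by (simp add: J.a_closed)
    ultimately show "a \<oplus> b \<in> {x \<in> carrier R. x \<otimes> t \<in> J}"
      using a b by simp
  qed
next
  fix a x assume a: "a \<in> {x \<in> carrier R. x \<otimes> t \<in> J}" and x: "x \<in> carrier R"
  have "x \<otimes> a \<otimes> t = x \<otimes> (a \<otimes> t)" using a x t by (simp add: m_assoc)
  moreover have "x \<otimes> (a \<otimes> t) \<in> J" using a x by (simp add: ideal.I_l_closed[OF J])
  ultimately show "x \<otimes> a \<in> {x \<in> carrier R. x \<otimes> t \<in> J}" using a x by simp
  have "a \<otimes> x \<otimes> t = x \<otimes> (a \<otimes> t)" using a x t by (simp add: m_lcomm m_comm)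
  moreover have "x \<otimes> (a \<otimes> t) \<in> J" using a x by (simp add: ideal.I_l_closed[OF J])
  ultimately show "a \<otimes> x \<in> {x \<in> carrier R. x \<otimes> t \<in> J}" using a x by simp
qed

lemma (in cring) prod_genideal_sub:
  assumes J: "ideal J R" and S: "S \<subseteq> carrier R" and T: "T \<subseteq> carrier R"
    and st: "\<And>s t. s \<in> S \<Longrightarrow> t \<in> T \<Longrightarrow> s \<otimes> t \<in> J"
  shows "ideal_prod R (Idl S) (Idl T) \<subseteq> J"
proof
  interpret J: ideal J R by (rule J)
  have Jc: "\<And>a. a \<in> J \<Longrightarrow> a \<in> carrier R" by (rule J.Icarr)
  have step1: "\<And>i t. i \<in> Idl S \<Longrightarrow> t \<in> T \<Longrightarrow> i \<otimes> t \<in> J"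
  proof -
    fix i t assume i: "i \<in> Idl S" and t: "t \<in> T"
    have "Idl S \<subseteq> {x \<in> carrier R. x \<otimes> t \<in> J}"
      using st t S T by (intro genideal_minimal mult_ideal J) auto
    thus "i \<otimes> t \<in> J" using i by blast
  qed
  have step2: "\<And>i j. i \<in> Idl S \<Longrightarrow> j \<in> Idl T \<Longrightarrow> i \<otimes> j \<in> J"
  proof -
    fix i j assume i: "i \<in> Idl S" and j: "j \<in> Idl T"
    have ic: "i \<in> carrier R" by (rule ideal.Icarr[OF genideal_ideal[OF S] i])
    have "Idl T \<subseteq> {x \<in> carrier R. x \<otimes> i \<in> J}"
    proof (intro genideal_minimal mult_ideal J ic subsetI CollectI conjI)
      fix t assume t: "t \<in> T"
      show "t \<in> carrier R" using t T by auto
      have tc: "t \<in> carrier R" using t T by auto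
      show "t \<otimes> i \<in> J" using step1[OF i t] m_comm[OF tc ic] by simp
    qed
    hence "j \<otimes> i \<in> J" "j \<in> carrier R" using j by auto
    thus "i \<otimes> j \<in> J" using ic by (simp add: m_comm)
  qed
  fix x assume "x \<in> ideal_prod R (Idl S) (Idl T)"
  thus "x \<in> J"
  proof (induction x rule: ideal_prod.induct)
    case (prod i j) thus ?case using step2 by blast
  next
    case (sum s1 s2) thus ?case using J by (simp add: J.a_closed)
  qed
qed




lemma (in cring) idealI_simple:
  assumes S: "S \<subseteq> carrier R" and z: "\<zero> \<in> S"
    and ad: "\<And>a b. a \<in> S \<Longrightarrow> b \<in> S \<Longrightarrow> a \<oplus> b \<in> S"
    and sm: "\<And>r a. r \<in> carrier R \<Longrightarrow> a \<in> S \<Longrightarrow> r \<otimes> a \<in> S"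
  shows "ideal S R"
proof (rule idealI)
  show "ring R" ..
  show "subgroup S (add_monoid R)"
  proof (rule add.subgroupI)
    show "S \<subseteq> carrier R" by (rule S)
    show "S \<noteq> {}" using z by blast
  next
    fix a assume a: "a \<in> S"
    hence ac: "a \<in> carrier R" using S by blast
    have "(\<ominus> \<one>) \<otimes> a = \<ominus> (\<one> \<otimes> a)" using ac by (simp add: l_minus)
    hence "\<ominus> a = (\<ominus> \<one>) \<otimes> a" using ac by simp
    thus "\<ominus> a \<in> S" using sm[OF _ a] by simp
  next
    fix a b assume "a \<in> S" "b \<in> S" thus "a \<oplus> b \<in> S" by (rule ad)
  qed
next
  fix a x assume a: "a \<in> S" and x: "x \<in> carrier R"
  show "x \<otimes> a \<in> S" by (rule sm[OF x a])
  have "a \<otimes> x = x \<otimes> a" using a x S by (simp add: m_comm subsetD)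
  thus "a \<otimes> x \<in> S" using sm[OF x a] by simp
qed

lemma UP_carrier: "carrier (UP A) = up A" by (simp add: UP_def)

lemma UP_coeff: "f \<in> up A \<Longrightarrow> coeff (UP A) f = f" by (simp add: UP_def)

lemma UP_mult: "f \<in> up A \<Longrightarrow> g \<in> up A \<Longrightarrow>
   f \<otimes>\<^bsub>UP A\<^esub> g = (\<lambda>n. finsum A (\<lambda>i. f i \<otimes>\<^bsub>A\<^esub> g (n - i)) {..n})"
  by (simp add: UP_def)

lemma content_eq: "f \<in> up A \<Longrightarrow> content A f = Idl\<^bsub>A\<^esub> (range f)"
  by (simp add: content_def UP_coeff)

lemma (in cring) range_up: "f \<in> up R \<Longrightarrow> range f \<subseteq> carrier R"
  by auto

lemma (in cring) UP_mult_closed': "f \<in> up R \<Longrightarrow> g \<in> up R \<Longrightarrow> f \<otimes>\<^bsub>UP R\<^esub> g \<in> up R"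
proof -
  interpret UP_cring R "UP R" by unfold_locales simp
  assume "f \<in> up R" "g \<in> up R"
  thus ?thesis using P.m_closed[of f g] by (simp add: UP_carrier)
qed

lemma (in cring) content_mult_sub:
  assumes f: "f \<in> up R" and g: "g \<in> up R"
  shows "content R (f \<otimes>\<^bsub>UP R\<^esub> g) \<subseteq> ideal_prod R (content R f) (content R g)"
proof -
  have fg: "f \<otimes>\<^bsub>UP R\<^esub> g \<in> up R" by (rule UP_mult_closed'[OF f g])
  have If: "ideal (Idl (range f)) R" by (rule genideal_ideal[OF range_up[OF f]])
  have Ig: "ideal (Idl (range g)) R" by (rule genideal_ideal[OF range_up[OF g]])
  have J: "ideal (ideal_prod R (Idl (range f)) (Idl (range g))) R"
    by (rule ideal_prod_is_ideal[OF If Ig])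
  have "Idl (range (f \<otimes>\<^bsub>UP R\<^esub> g)) \<subseteq> ideal_prod R (Idl (range f)) (Idl (range g))"
  proof (rule genideal_minimal[OF J], rule subsetI)
    fix x assume "x \<in> range (f \<otimes>\<^bsub>UP R\<^esub> g)"
    then obtain n where xn: "x = (f \<otimes>\<^bsub>UP R\<^esub> g) n" by blast
    have "x = finsum R (\<lambda>i. f i \<otimes> g (n - i)) {..n}" using xn UP_mult[OF f g] by simp
    also have "\<dots> \<in> ideal_prod R (Idl (range f)) (Idl (range g))"
    proof (rule ideal_finsum[OF J])
      fix i
      have "f i \<in> Idl (range f)" using genideal_self[OF range_up[OF f]] by blast
      moreover have "g (n - i) \<in> Idl (range g)" using genideal_self[OF range_up[OF g]] by blast
      ultimately show "f i \<otimes> g (n - i) \<in> ideal_prod R (Idl (range f)) (Idl (range g))"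
        by (rule ideal_prod.prod)
    qed simp
    finally show "x \<in> ideal_prod R (Idl (range f)) (Idl (range g))" .
  qed
  thus ?thesis using f g fg by (simp add: content_eq)
qed

lemma gaussianI:
  assumes cr: "cring A"
    and h: "\<And>f g k l. f \<in> up A \<Longrightarrow> g \<in> up A \<Longrightarrow>
                f k \<otimes>\<^bsub>A\<^esub> g l \<in> content A (f \<otimes>\<^bsub>UP A\<^esub> g)"
  shows "gaussian_ring A"
  unfolding gaussian_ring_def UP_carrier
proof (intro ballI equalityI)
  interpret cring A by (rule cr)
  fix f g assume f: "f \<in> up A" and g: "g \<in> up A"
  show "content A (f \<otimes>\<^bsub>UP A\<^esub> g) \<subseteq> ideal_prod A (content A f) (content A g)"
    by (rule content_mult_sub[OF f g])
  have fg: "f \<otimes>\<^bsub>UP A\<^esub> g \<in> up A" by (rule UP_mult_closed'[OF f g])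
  have J: "ideal (content A (f \<otimes>\<^bsub>UP A\<^esub> g)) A"
    unfolding content_eq[OF fg] by (rule genideal_ideal[OF range_up[OF fg]])
  show "ideal_prod A (content A f) (content A g) \<subseteq> content A (f \<otimes>\<^bsub>UP A\<^esub> g)"
    unfolding content_eq[OF f] content_eq[OF g]
  proof (rule prod_genideal_sub[OF J range_up[OF f] range_up[OF g]])
    fix s t assume "s \<in> range f" "t \<in> range g"
    then obtain k l where "s = f k" "t = g l" by blast
    thus "s \<otimes>\<^bsub>A\<^esub> t \<in> content A (f \<otimes>\<^bsub>UP A\<^esub> g)" using h[OF f g] by simp
  qed
qed

lemma gaussianD:
  assumes cr: "cring A" and ga: "gaussian_ring A" and f: "f \<in> up A" and g: "g \<in> up A"
  shows "f k \<otimes>\<^bsub>A\<^esub> g l \<in> content A (f \<otimes>\<^bsub>UP A\<^esub> g)"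
proof -
  interpret cring A by (rule cr)
  have "f k \<in> content A f" using genideal_self[OF range_up[OF f]] f by (auto simp: content_eq)
  moreover have "g l \<in> content A g" using genideal_self[OF range_up[OF g]] g by (auto simp: content_eq)
  ultimately have "f k \<otimes>\<^bsub>A\<^esub> g l \<in> ideal_prod A (content A f) (content A g)"
    by (rule ideal_prod.prod)
  thus ?thesis using ga f g unfolding gaussian_ring_def UP_carrier by blast
qed




locale dup = ideal I R + cring R for I and R (structure)

lemma amalg_ops [simp]:
  "add (amalg_dup R I) (a, b) (c, d) = (a \<oplus>\<^bsub>R\<^esub> c, b \<oplus>\<^bsub>R\<^esub> d)"
  "mult (amalg_dup R I) (a, b) (c, d) = (a \<otimes>\<^bsub>R\<^esub> c, b \<otimes>\<^bsub>R\<^esub> d)"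
  "zero (amalg_dup R I) = (\<zero>\<^bsub>R\<^esub>, \<zero>\<^bsub>R\<^esub>)"
  "one (amalg_dup R I) = (\<one>\<^bsub>R\<^esub>, \<one>\<^bsub>R\<^esub>)"
  by (simp_all add: amalg_dup_def)

context dup
begin

lemma I_add: "x \<in> I \<Longrightarrow> y \<in> I \<Longrightarrow> x \<oplus> y \<in> I"
  by (rule additive_subgroup.a_closed[OF is_additive_subgroup])
lemma I_neg: "x \<in> I \<Longrightarrow> \<ominus> x \<in> I"
  by (rule additive_subgroup.a_inv_closed[OF is_additive_subgroup])
lemma I_zero: "\<zero> \<in> I"
  by (rule additive_subgroup.zero_closed[OF is_additive_subgroup])
lemma minus_self: "x \<in> carrier R \<Longrightarrow> x \<ominus> x = \<zero>"
  by (simp add: a_minus_def r_neg)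

lemma D_mem: "(a, b) \<in> carrier (amalg_dup R I) \<longleftrightarrow> a \<in> carrier R \<and> b \<in> carrier R \<and> b \<ominus> a \<in> I"
proof
  assume "(a, b) \<in> carrier (amalg_dup R I)"
  then obtain i where a: "a \<in> carrier R" and i: "i \<in> I" and b: "b = a \<oplus> i"
    by (auto simp: amalg_dup_def)
  have ic: "i \<in> carrier R" using i by (rule Icarr)
  have "b \<ominus> a = i" unfolding b using a ic by algebra
  thus "a \<in> carrier R \<and> b \<in> carrier R \<and> b \<ominus> a \<in> I" using a ic i b by simp
next
  assume h: "a \<in> carrier R \<and> b \<in> carrier R \<and> b \<ominus> a \<in> I"
  hence "b = a \<oplus> (b \<ominus> a)" by algebra
  thus "(a, b) \<in> carrier (amalg_dup R I)" using h by (auto simp: amalg_dup_def)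
qed

lemma D_carrier_sub: "x \<in> carrier (amalg_dup R I) \<Longrightarrow> fst x \<in> carrier R \<and> snd x \<in> carrier R"
  by (cases x) (simp add: D_mem)

lemma D_add_closed:
  assumes "(a, b) \<in> carrier (amalg_dup R I)" "(c, d) \<in> carrier (amalg_dup R I)"
  shows "(a \<oplus> c, b \<oplus> d) \<in> carrier (amalg_dup R I)"
proof -
  have h: "a \<in> carrier R" "b \<in> carrier R" "b \<ominus> a \<in> I" "c \<in> carrier R" "d \<in> carrier R" "d \<ominus> c \<in> I"
    using assms by (simp_all add: D_mem)
  have "(b \<oplus> d) \<ominus> (a \<oplus> c) = (b \<ominus> a) \<oplus> (d \<ominus> c)" using h(1,2,4,5) by algebra
  moreover have "(b \<ominus> a) \<oplus> (d \<ominus> c) \<in> I" using h(3,6) by (rule I_add)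
  ultimately show ?thesis using h by (simp add: D_mem)
qed

lemma D_mult_closed:
  assumes "(a, b) \<in> carrier (amalg_dup R I)" "(c, d) \<in> carrier (amalg_dup R I)"
  shows "(a \<otimes> c, b \<otimes> d) \<in> carrier (amalg_dup R I)"
proof -
  have h: "a \<in> carrier R" "b \<in> carrier R" "b \<ominus> a \<in> I" "c \<in> carrier R" "d \<in> carrier R" "d \<ominus> c \<in> I"
    using assms by (simp_all add: D_mem)
  have "(b \<otimes> d) \<ominus> (a \<otimes> c) = b \<otimes> (d \<ominus> c) \<oplus> (b \<ominus> a) \<otimes> c" using h(1,2,4,5) by algebra
  moreover have "b \<otimes> (d \<ominus> c) \<oplus> (b \<ominus> a) \<otimes> c \<in> I"
    using h by (intro I_add I_l_closed[of "d \<ominus> c" b] I_r_closed[of "b \<ominus> a" c])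
  ultimately show ?thesis using h by (simp add: D_mem)
qed

lemma D_neg:
  assumes "(a, b) \<in> carrier (amalg_dup R I)"
  shows "(\<ominus> a, \<ominus> b) \<in> carrier (amalg_dup R I)"
proof -
  have h: "a \<in> carrier R" "b \<in> carrier R" "b \<ominus> a \<in> I"
    using assms by (simp_all add: D_mem)
  have "(\<ominus> b) \<ominus> (\<ominus> a) = \<ominus> (b \<ominus> a)" using h(1,2) by algebra
  moreover have "\<ominus> (b \<ominus> a) \<in> I" using h(3) by (rule I_neg)
  ultimately show ?thesis using h by (simp add: D_mem)
qed

lemma D_cring: "cring (amalg_dup R I)"
proof (rule cringI)
  show "abelian_group (amalg_dup R I)"
  proof (rule abelian_groupI)
    fix x y z
    assume x: "x \<in> carrier (amalg_dup R I)" and y: "y \<in> carrier (amalg_dup R I)"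
    obtain a b where xab: "x = (a, b)" by (cases x)
    obtain c d where ycd: "y = (c, d)" by (cases y)
    show "x \<oplus>\<^bsub>amalg_dup R I\<^esub> y \<in> carrier (amalg_dup R I)"
      using D_add_closed x y xab ycd by simp
    show "x \<oplus>\<^bsub>amalg_dup R I\<^esub> y = y \<oplus>\<^bsub>amalg_dup R I\<^esub> x"
      using D_carrier_sub[OF x] D_carrier_sub[OF y] xab ycd by (simp add: a_comm)
    assume z: "z \<in> carrier (amalg_dup R I)"
    obtain e f where zef: "z = (e, f)" by (cases z)
    show "x \<oplus>\<^bsub>amalg_dup R I\<^esub> y \<oplus>\<^bsub>amalg_dup R I\<^esub> z = x \<oplus>\<^bsub>amalg_dup R I\<^esub> (y \<oplus>\<^bsub>amalg_dup R I\<^esub> z)"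
      using D_carrier_sub[OF x] D_carrier_sub[OF y] D_carrier_sub[OF z] xab ycd zef by (simp add: a_assoc)
  next
    show "\<zero>\<^bsub>amalg_dup R I\<^esub> \<in> carrier (amalg_dup R I)" by (simp add: D_mem minus_self I_zero)
  next
    fix x assume x: "x \<in> carrier (amalg_dup R I)"
    obtain a b where xab: "x = (a, b)" by (cases x)
    show "\<zero>\<^bsub>amalg_dup R I\<^esub> \<oplus>\<^bsub>amalg_dup R I\<^esub> x = x"
      using D_carrier_sub[OF x] xab by simp
    show "\<exists>y\<in>carrier (amalg_dup R I). y \<oplus>\<^bsub>amalg_dup R I\<^esub> x = \<zero>\<^bsub>amalg_dup R I\<^esub>"
    proof
      show "(\<ominus> a, \<ominus> b) \<in> carrier (amalg_dup R I)" using D_neg x xab by simp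
      show "(\<ominus> a, \<ominus> b) \<oplus>\<^bsub>amalg_dup R I\<^esub> x = \<zero>\<^bsub>amalg_dup R I\<^esub>"
        using D_carrier_sub[OF x] xab by (simp add: l_neg)
    qed
  qed
next
  show "comm_monoid (amalg_dup R I)"
  proof (rule comm_monoidI)
    fix x y z
    assume x: "x \<in> carrier (amalg_dup R I)" and y: "y \<in> carrier (amalg_dup R I)"
    obtain a b where xab: "x = (a, b)" by (cases x)
    obtain c d where ycd: "y = (c, d)" by (cases y)
    show "x \<otimes>\<^bsub>amalg_dup R I\<^esub> y \<in> carrier (amalg_dup R I)"
      using D_mult_closed x y xab ycd by simp
    show "x \<otimes>\<^bsub>amalg_dup R I\<^esub> y = y \<otimes>\<^bsub>amalg_dup R I\<^esub> x"
      using D_carrier_sub[OF x] D_carrier_sub[OF y] xab ycd by (simp add: m_comm)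
    assume z: "z \<in> carrier (amalg_dup R I)"
    obtain e f where zef: "z = (e, f)" by (cases z)
    show "x \<otimes>\<^bsub>amalg_dup R I\<^esub> y \<otimes>\<^bsub>amalg_dup R I\<^esub> z = x \<otimes>\<^bsub>amalg_dup R I\<^esub> (y \<otimes>\<^bsub>amalg_dup R I\<^esub> z)"
      using D_carrier_sub[OF x] D_carrier_sub[OF y] D_carrier_sub[OF z] xab ycd zef by (simp add: m_assoc)
  next
    show "\<one>\<^bsub>amalg_dup R I\<^esub> \<in> carrier (amalg_dup R I)" by (simp add: D_mem minus_self I_zero)
  next
    fix x assume x: "x \<in> carrier (amalg_dup R I)"
    obtain a b where xab: "x = (a, b)" by (cases x)
    show "\<one>\<^bsub>amalg_dup R I\<^esub> \<otimes>\<^bsub>amalg_dup R I\<^esub> x = x"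
      using D_carrier_sub[OF x] xab by simp
  qed
next
  fix x y z
  assume x: "x \<in> carrier (amalg_dup R I)" and y: "y \<in> carrier (amalg_dup R I)"
     and z: "z \<in> carrier (amalg_dup R I)"
  obtain a b where xab: "x = (a, b)" by (cases x)
  obtain c d where ycd: "y = (c, d)" by (cases y)
  obtain e f where zef: "z = (e, f)" by (cases z)
  show "(x \<oplus>\<^bsub>amalg_dup R I\<^esub> y) \<otimes>\<^bsub>amalg_dup R I\<^esub> z = x \<otimes>\<^bsub>amalg_dup R I\<^esub> z \<oplus>\<^bsub>amalg_dup R I\<^esub> y \<otimes>\<^bsub>amalg_dup R I\<^esub> z"
    using D_carrier_sub[OF x] D_carrier_sub[OF y] D_carrier_sub[OF z] xab ycd zef by (simp add: l_distr)
qed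

end



lemma (in cring) Idl_repr:
  assumes p: "p \<in> up R" and bd: "bound \<zero> N p" and x: "x \<in> Idl (range p)"
  shows "\<exists>c. (\<forall>m. c m \<in> carrier R) \<and> x = finsum R (\<lambda>m. c m \<otimes> p m) {..N}"
proof -
  have pc: "\<And>m. p m \<in> carrier R" using p by (rule mem_upD)
  define C where "C = {finsum R (\<lambda>m. c m \<otimes> p m) {..N} | c. \<forall>m. c m \<in> carrier R}"
  have Cid: "ideal C R"
  proof (rule idealI_simple)
    show "C \<subseteq> carrier R"
    proof
      fix y assume "y \<in> C"
      then obtain c where c: "\<forall>m. c m \<in> carrier R" and y: "y = finsum R (\<lambda>m. c m \<otimes> p m) {..N}"
        unfolding C_def by blast
      show "y \<in> carrier R" unfolding y by (rule finsum_closed) (use c pc in auto)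
    qed
  next
    have "finsum R (\<lambda>m. \<zero> \<otimes> p m) {..N} = finsum R (\<lambda>m. \<zero>) {..N}"
      by (rule finsum_cong') (use pc in auto)
    also have "\<dots> = \<zero>" by (rule finsum_zero)
    finally have eq: "\<zero> = finsum R (\<lambda>m. \<zero> \<otimes> p m) {..N}" by simp
    show "\<zero> \<in> C" unfolding C_def
      by (rule CollectI, rule exI[where x="\<lambda>m. \<zero>"]) (simp add: eq[symmetric])
  next
    fix a b assume "a \<in> C" "b \<in> C"
    then obtain c c' where c: "\<forall>m. c m \<in> carrier R" and a: "a = finsum R (\<lambda>m. c m \<otimes> p m) {..N}"
      and c': "\<forall>m. c' m \<in> carrier R" and b: "b = finsum R (\<lambda>m. c' m \<otimes> p m) {..N}"
      unfolding C_def by blast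
    have "a \<oplus> b = finsum R (\<lambda>m. c m \<otimes> p m \<oplus> c' m \<otimes> p m) {..N}"
      unfolding a b by (rule finsum_addf[symmetric]) (use c c' pc in auto)
    also have "\<dots> = finsum R (\<lambda>m. (c m \<oplus> c' m) \<otimes> p m) {..N}"
      by (rule finsum_cong') (use c c' pc in \<open>auto simp: l_distr\<close>)
    finally have eq: "a \<oplus> b = finsum R (\<lambda>m. (c m \<oplus> c' m) \<otimes> p m) {..N}" .
    show "a \<oplus> b \<in> C" unfolding C_def
      by (rule CollectI, rule exI[where x="\<lambda>m. c m \<oplus> c' m"]) (use c c' eq in simp)
  next
    fix r a assume r: "r \<in> carrier R" and "a \<in> C"
    then obtain c where c: "\<forall>m. c m \<in> carrier R" and a: "a = finsum R (\<lambda>m. c m \<otimes> p m) {..N}"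
      unfolding C_def by blast
    have "r \<otimes> a = finsum R (\<lambda>m. r \<otimes> (c m \<otimes> p m)) {..N}"
      unfolding a by (rule finsum_rdistr) (use r c pc in auto)
    also have "\<dots> = finsum R (\<lambda>m. (r \<otimes> c m) \<otimes> p m) {..N}"
      by (rule finsum_cong') (use r c pc in \<open>auto simp: m_assoc\<close>)
    finally have eq: "r \<otimes> a = finsum R (\<lambda>m. (r \<otimes> c m) \<otimes> p m) {..N}" .
    show "r \<otimes> a \<in> C" unfolding C_def
      by (rule CollectI, rule exI[where x="\<lambda>m. r \<otimes> c m"]) (use c r eq in simp)
  qed
  have "range p \<subseteq> C"
  proof
    fix y assume "y \<in> range p"
    then obtain m where y: "y = p m" by blast
    show "y \<in> C"
    proof (cases "m \<le> N")
      case True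
      define c where "c = (\<lambda>j. if j = m then \<one> else \<zero>)"
      have cc: "\<forall>j. c j \<in> carrier R" unfolding c_def by auto
      have "finsum R (\<lambda>j. c j \<otimes> p j) {..N} = finsum R (\<lambda>j. if m = j then p j else \<zero>) {..N}"
        by (rule finsum_cong') (use pc in \<open>auto simp: c_def\<close>)
      also have "\<dots> = p m" by (rule finsum_singleton) (use True pc in auto)
      finally have eq: "finsum R (\<lambda>j. c j \<otimes> p j) {..N} = p m" .
      show ?thesis unfolding y C_def
        by (rule CollectI, rule exI[where x=c]) (use cc eq in simp)
    next
      case False
      hence "p m = \<zero>" using bd by (auto simp: bound_def)
      moreover have "\<zero> \<in> C" by (rule additive_subgroup.zero_closed[OF ideal.axioms(1)[OF Cid]])
      ultimately show ?thesis unfolding y by simp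
    qed
  qed
  hence "Idl (range p) \<subseteq> C" by (rule genideal_minimal[OF Cid])
  thus ?thesis using x unfolding C_def by blast
qed

lemma bound_mono: "bound z m f \<Longrightarrow> m \<le> n \<Longrightarrow> bound z n f"
  by (auto simp: bound_def)

context dup
begin

lemma D_finsum:
  assumes fin: "finite A" and Phi: "Phi \<in> A \<rightarrow> carrier (amalg_dup R I)"
  shows "finsum (amalg_dup R I) Phi A = (finsum R (\<lambda>i. fst (Phi i)) A, finsum R (\<lambda>i. snd (Phi i)) A)"
proof -
  interpret D: cring "amalg_dup R I" by (rule D_cring)
  show ?thesis using fin Phi
  proof (induction A rule: finite_induct)
    case empty
    then show ?case by simp
  next
    case (insert x F)
    have Px: "Phi x \<in> carrier (amalg_dup R I)" using insert by auto
    have PF: "Phi \<in> F \<rightarrow> carrier (amalg_dup R I)" using insert by auto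
    have c1: "\<And>i. i \<in> insert x F \<Longrightarrow> fst (Phi i) \<in> carrier R \<and> snd (Phi i) \<in> carrier R"
      using insert D_carrier_sub by blast
    have "finsum (amalg_dup R I) Phi (insert x F) = Phi x \<oplus>\<^bsub>amalg_dup R I\<^esub> finsum (amalg_dup R I) Phi F"
      by (rule D.finsum_insert) (use insert Px PF in auto)
    also have "\<dots> = Phi x \<oplus>\<^bsub>amalg_dup R I\<^esub> (finsum R (\<lambda>i. fst (Phi i)) F, finsum R (\<lambda>i. snd (Phi i)) F)"
      using insert.IH[OF PF] by simp
    also have "\<dots> = (fst (Phi x) \<oplus> finsum R (\<lambda>i. fst (Phi i)) F, snd (Phi x) \<oplus> finsum R (\<lambda>i. snd (Phi i)) F)"
      by (cases "Phi x") simp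
    also have "\<dots> = (finsum R (\<lambda>i. fst (Phi i)) (insert x F), finsum R (\<lambda>i. snd (Phi i)) (insert x F))"
      using insert c1 by (simp add: finsum_insert Pi_def)
    finally show ?case .
  qed
qed

lemma up_fst: "F \<in> up (amalg_dup R I) \<Longrightarrow> (\<lambda>n. fst (F n)) \<in> up R"
proof
  assume F: "F \<in> up (amalg_dup R I)"
  fix n show "fst (F n) \<in> carrier R" using D_carrier_sub[OF mem_upD[OF F]] by simp
next
  assume F: "F \<in> up (amalg_dup R I)"
  then obtain N where "bound \<zero>\<^bsub>amalg_dup R I\<^esub> N F" by (auto simp: up_def)
  hence "bound \<zero> N (\<lambda>n. fst (F n))" by (auto simp: bound_def)
  thus "\<exists>N. bound \<zero> N (\<lambda>n. fst (F n))" by blast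
qed

lemma up_snd: "F \<in> up (amalg_dup R I) \<Longrightarrow> (\<lambda>n. snd (F n)) \<in> up R"
proof
  assume F: "F \<in> up (amalg_dup R I)"
  fix n show "snd (F n) \<in> carrier R" using D_carrier_sub[OF mem_upD[OF F]] by simp
next
  assume F: "F \<in> up (amalg_dup R I)"
  then obtain N where "bound \<zero>\<^bsub>amalg_dup R I\<^esub> N F" by (auto simp: up_def)
  hence "bound \<zero> N (\<lambda>n. snd (F n))" by (auto simp: bound_def)
  thus "\<exists>N. bound \<zero> N (\<lambda>n. snd (F n))" by blast
qed

lemma up_diag: "f \<in> up R \<Longrightarrow> (\<lambda>n. (f n, f n)) \<in> up (amalg_dup R I)"
proof
  assume f: "f \<in> up R"
  fix n show "(f n, f n) \<in> carrier (amalg_dup R I)"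
    using mem_upD[OF f, of n] by (simp add: D_mem minus_self I_zero)
next
  assume f: "f \<in> up R"
  then obtain N where "bound \<zero> N f" by (auto simp: up_def)
  hence "bound \<zero>\<^bsub>amalg_dup R I\<^esub> N (\<lambda>n. (f n, f n))" by (auto simp: bound_def)
  thus "\<exists>N. bound \<zero>\<^bsub>amalg_dup R I\<^esub> N (\<lambda>n. (f n, f n))" by blast
qed

lemma D_UP_mult:
  assumes F: "F \<in> up (amalg_dup R I)" and G: "G \<in> up (amalg_dup R I)"
  shows "F \<otimes>\<^bsub>UP (amalg_dup R I)\<^esub> G =
    (\<lambda>n. (((\<lambda>n. fst (F n)) \<otimes>\<^bsub>UP R\<^esub> (\<lambda>n. fst (G n))) n, ((\<lambda>n. snd (F n)) \<otimes>\<^bsub>UP R\<^esub> (\<lambda>n. snd (G n))) n))"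
proof -
  interpret D: cring "amalg_dup R I" by (rule D_cring)
  have Fc: "\<And>i. F i \<in> carrier (amalg_dup R I)" using F by (rule mem_upD)
  have Gc: "\<And>i. G i \<in> carrier (amalg_dup R I)" using G by (rule mem_upD)
  show ?thesis
  proof
    fix n
    have Phi: "(\<lambda>i. F i \<otimes>\<^bsub>amalg_dup R I\<^esub> G (n - i)) \<in> {..n} \<rightarrow> carrier (amalg_dup R I)"
      using Fc Gc by auto
    have e: "\<And>i. F i \<otimes>\<^bsub>amalg_dup R I\<^esub> G (n - i) = (fst (F i) \<otimes> fst (G (n - i)), snd (F i) \<otimes> snd (G (n - i)))"
      by (metis amalg_ops(2) prod.collapse)
    show "(F \<otimes>\<^bsub>UP (amalg_dup R I)\<^esub> G) n = (((\<lambda>n. fst (F n)) \<otimes>\<^bsub>UP R\<^esub> (\<lambda>n. fst (G n))) n, ((\<lambda>n. snd (F n)) \<otimes>\<^bsub>UP R\<^esub> (\<lambda>n. snd (G n))) n)"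
      unfolding UP_mult[OF F G] UP_mult[OF up_fst[OF F] up_fst[OF G]] UP_mult[OF up_snd[OF F] up_snd[OF G]]
      using D_finsum[OF _ Phi] by (simp add: e)
  qed
qed

end



context dup
begin

lemma dir2:
  assumes ga: "gaussian_ring (amalg_dup R I)"
  shows "gaussian_ring R"
proof (rule gaussianI[OF is_cring])
  interpret D: cring "amalg_dup R I" by (rule D_cring)
  fix f g k l assume f: "f \<in> up R" and g: "g \<in> up R"
  define F where "F = (\<lambda>n. (f n, f n))"
  define G where "G = (\<lambda>n. (g n, g n))"
  define P where "P = f \<otimes>\<^bsub>UP R\<^esub> g"
  have F: "F \<in> up (amalg_dup R I)" unfolding F_def by (rule up_diag[OF f])
  have G: "G \<in> up (amalg_dup R I)" unfolding G_def by (rule up_diag[OF g])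
  have P: "P \<in> up R" unfolding P_def by (rule UP_mult_closed'[OF f g])
  have FG: "F \<otimes>\<^bsub>UP (amalg_dup R I)\<^esub> G = (\<lambda>n. (P n, P n))"
    using D_UP_mult[OF F G] by (simp add: F_def G_def P_def)
  have FGup: "(\<lambda>n. (P n, P n)) \<in> up (amalg_dup R I)" by (rule up_diag[OF P])
  have "F k \<otimes>\<^bsub>amalg_dup R I\<^esub> G l \<in> content (amalg_dup R I) (F \<otimes>\<^bsub>UP (amalg_dup R I)\<^esub> G)"
    by (rule gaussianD[OF D_cring ga F G])
  hence mem: "(f k \<otimes> g l, f k \<otimes> g l) \<in> Idl\<^bsub>amalg_dup R I\<^esub> (range (\<lambda>n. (P n, P n)))"
    unfolding FG content_eq[OF FGup] by (simp add: F_def G_def)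
  have Pr: "range P \<subseteq> carrier R" by (rule range_up[OF P])
  have IP: "ideal (Idl (range P)) R" by (rule genideal_ideal[OF Pr])
  define J where "J = {x \<in> carrier (amalg_dup R I). fst x \<in> Idl (range P)}"
  have Jid: "ideal J (amalg_dup R I)"
  proof (rule D.idealI_simple)
    show "J \<subseteq> carrier (amalg_dup R I)" unfolding J_def by blast
    show "\<zero>\<^bsub>amalg_dup R I\<^esub> \<in> J" unfolding J_def
      using additive_subgroup.zero_closed[OF ideal.axioms(1)[OF IP]] by (simp add: D_mem minus_self I_zero)
  next
    fix x y assume x: "x \<in> J" and y: "y \<in> J"
    obtain a b where xab: "x = (a, b)" by (cases x)
    obtain c d where ycd: "y = (c, d)" by (cases y)
    have "x \<oplus>\<^bsub>amalg_dup R I\<^esub> y \<in> carrier (amalg_dup R I)" using x y unfolding J_def by simp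
    moreover have "a \<oplus> c \<in> Idl (range P)"
      using x y xab ycd additive_subgroup.a_closed[OF ideal.axioms(1)[OF IP]] unfolding J_def by simp
    ultimately show "x \<oplus>\<^bsub>amalg_dup R I\<^esub> y \<in> J" unfolding J_def using xab ycd by simp
  next
    fix r x assume r: "r \<in> carrier (amalg_dup R I)" and x: "x \<in> J"
    obtain a b where xab: "x = (a, b)" by (cases x)
    obtain c d where rcd: "r = (c, d)" by (cases r)
    have "r \<otimes>\<^bsub>amalg_dup R I\<^esub> x \<in> carrier (amalg_dup R I)" using x r unfolding J_def by simp
    moreover have "c \<otimes> a \<in> Idl (range P)"
      using x r xab rcd ideal.I_l_closed[OF IP] D_carrier_sub[OF r] unfolding J_def by simp
    ultimately show "r \<otimes>\<^bsub>amalg_dup R I\<^esub> x \<in> J" unfolding J_def using xab rcd by simp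
  qed
  have "range (\<lambda>n. (P n, P n)) \<subseteq> J"
  proof
    fix z assume "z \<in> range (\<lambda>n. (P n, P n))"
    then obtain n where z: "z = (P n, P n)" by blast
    have "z \<in> carrier (amalg_dup R I)" unfolding z by (rule mem_upD[OF FGup])
    moreover have "P n \<in> Idl (range P)" using genideal_self[OF Pr] by blast
    ultimately show "z \<in> J" unfolding J_def z by simp
  qed
  hence "Idl\<^bsub>amalg_dup R I\<^esub> (range (\<lambda>n. (P n, P n))) \<subseteq> J" by (rule D.genideal_minimal[OF Jid])
  hence "f k \<otimes> g l \<in> Idl (range P)" using mem unfolding J_def by auto
  thus "f k \<otimes> g l \<in> content R (f \<otimes>\<^bsub>UP R\<^esub> g)" using content_eq[OF P] unfolding P_def by simp
qed

end



context dup
begin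

lemma dir1:
  assumes pu: "pure_ideal R I" and ga: "gaussian_ring R"
  shows "gaussian_ring (amalg_dup R I)"
proof (rule gaussianI[OF D_cring])
  interpret D: cring "amalg_dup R I" by (rule D_cring)
  fix F G a b assume F: "F \<in> up (amalg_dup R I)" and G: "G \<in> up (amalg_dup R I)"
  define f where "f = (\<lambda>n. fst (F n))"
  define h where "h = (\<lambda>n. snd (F n))"
  define g where "g = (\<lambda>n. fst (G n))"
  define k where "k = (\<lambda>n. snd (G n))"
  have f: "f \<in> up R" unfolding f_def by (rule up_fst[OF F])
  have h: "h \<in> up R" unfolding h_def by (rule up_snd[OF F])
  have g: "g \<in> up R" unfolding g_def by (rule up_fst[OF G])
  have k: "k \<in> up R" unfolding k_def by (rule up_snd[OF G])
  define P where "P = f \<otimes>\<^bsub>UP R\<^esub> g"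
  define Q where "Q = h \<otimes>\<^bsub>UP R\<^esub> k"
  have P: "P \<in> up R" unfolding P_def by (rule UP_mult_closed'[OF f g])
  have Q: "Q \<in> up R" unfolding Q_def by (rule UP_mult_closed'[OF h k])
  have Pc: "\<And>m. P m \<in> carrier R" using P by (rule mem_upD)
  have Qc: "\<And>m. Q m \<in> carrier R" using Q by (rule mem_upD)
  have FG: "F \<otimes>\<^bsub>UP (amalg_dup R I)\<^esub> G = (\<lambda>n. (P n, Q n))"
    using D_UP_mult[OF F G] by (simp add: f_def g_def h_def k_def P_def Q_def)
  have FGup: "(\<lambda>n. (P n, Q n)) \<in> up (amalg_dup R I)"
    using D.UP_mult_closed'[OF F G] unfolding FG .
  have PQc: "\<And>m. (P m, Q m) \<in> carrier (amalg_dup R I)" using mem_upD[OF FGup] by simp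
  have QP: "\<And>m. Q m \<ominus> P m \<in> I" using PQc by (simp add: D_mem)
  obtain N1 where N1: "bound \<zero> N1 P" using P by (auto simp: up_def)
  obtain N2 where N2: "bound \<zero> N2 Q" using Q by (auto simp: up_def)
  define N where "N = max N1 N2"
  have bP: "bound \<zero> N P" using bound_mono[OF N1] unfolding N_def by simp
  have bQ: "bound \<zero> N Q" using bound_mono[OF N2] unfolding N_def by simp
  define E where "E = f a \<otimes> g b"
  define H where "H = h a \<otimes> k b"
  have fa: "f a \<in> carrier R" using f by (rule mem_upD)
  have ga': "g b \<in> carrier R" using g by (rule mem_upD)
  have ha: "h a \<in> carrier R" using h by (rule mem_upD)
  have kb: "k b \<in> carrier R" using k by (rule mem_upD)
  have Ec: "E \<in> carrier R" unfolding E_def using fa ga' by simp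
  have Hc: "H \<in> carrier R" unfolding H_def using ha kb by simp
  have "E \<in> content R P" unfolding E_def P_def by (rule gaussianD[OF is_cring ga f g])
  hence "E \<in> Idl (range P)" using content_eq[OF P] by simp
  then obtain c where cc: "\<forall>m. c m \<in> carrier R" and Ec': "E = finsum R (\<lambda>m. c m \<otimes> P m) {..N}"
    using Idl_repr[OF P bP] by blast
  have "H \<in> content R Q" unfolding H_def Q_def by (rule gaussianD[OF is_cring ga h k])
  hence "H \<in> Idl (range Q)" using content_eq[OF Q] by simp
  then obtain d where dc: "\<forall>m. d m \<in> carrier R" and Hd: "H = finsum R (\<lambda>m. d m \<otimes> Q m) {..N}"
    using Idl_repr[OF Q bQ] by blast
  have Fa: "F a = (f a, h a)" unfolding f_def h_def by simp
  have Gb: "G b = (g b, k b)" unfolding g_def k_def by simp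
  have FaGb: "F a \<otimes>\<^bsub>amalg_dup R I\<^esub> G b = (E, H)" unfolding Fa Gb E_def H_def by simp
  have "F a \<otimes>\<^bsub>amalg_dup R I\<^esub> G b \<in> carrier (amalg_dup R I)"
    using mem_upD[OF F] mem_upD[OF G] by simp
  hence HE: "H \<ominus> E \<in> I" unfolding FaGb by (simp add: D_mem)
  define T where "T = (\<lambda>m. c m \<otimes> (Q m \<ominus> P m))"
  have TI: "\<And>m. T m \<in> I" unfolding T_def using QP cc by (simp add: I_l_closed)
  have Tc: "\<And>m. T m \<in> carrier R" using TI by (rule Icarr)
  define S where "S = finsum R (\<lambda>m. c m \<otimes> Q m) {..N}"
  have Sc: "S \<in> carrier R" unfolding S_def by (rule finsum_closed) (use cc Qc in auto)
  have "S = finsum R (\<lambda>m. c m \<otimes> P m \<oplus> T m) {..N}" unfolding S_def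
  proof (rule finsum_cong')
    fix m assume "m \<in> {..N}"
    have "c m \<in> carrier R" "P m \<in> carrier R" "Q m \<in> carrier R" using cc Pc Qc by auto
    thus "c m \<otimes> Q m = c m \<otimes> P m \<oplus> T m" unfolding T_def by algebra
  qed (use cc Pc Tc in auto)
  also have "\<dots> = E \<oplus> finsum R T {..N}" unfolding Ec'
    by (rule finsum_addf) (use cc Pc Tc in auto)
  finally have SE: "S = E \<oplus> finsum R T {..N}" .
  have sTI: "finsum R T {..N} \<in> I" by (rule ideal_finsum[OF is_ideal]) (use TI in auto)
  have sTc: "finsum R T {..N} \<in> carrier R" using sTI by (rule Icarr)
  define u where "u = S \<ominus> H"
  have "u = finsum R T {..N} \<oplus> \<ominus> (H \<ominus> E)" unfolding u_def SE using Ec Hc sTc by algebra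
  hence uI: "u \<in> I" using sTI HE by (simp add: I_add I_neg)
  obtain e where eI: "e \<in> I" and ue: "u \<otimes> e = u" using pure_local_unit[OF is_cring pu uI] by blast
  have ec: "e \<in> carrier R" using eI by (rule Icarr)
  have uc: "u \<in> carrier R" using uI by (rule Icarr)
  define y where "y = (\<lambda>m. c m \<oplus> e \<otimes> (d m \<ominus> c m))"
  have xD: "\<And>m. (c m, y m) \<in> carrier (amalg_dup R I)"
  proof -
    fix m
    have cm: "c m \<in> carrier R" and dm: "d m \<in> carrier R" using cc dc by auto
    have "y m \<ominus> c m = e \<otimes> (d m \<ominus> c m)" unfolding y_def using cm dm ec by algebra
    moreover have "e \<otimes> (d m \<ominus> c m) \<in> I" using eI cm dm by (simp add: I_r_closed)
    moreover have "y m \<in> carrier R" unfolding y_def using cm dm ec by simp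
    ultimately show "(c m, y m) \<in> carrier (amalg_dup R I)" using cm by (simp add: D_mem)
  qed
  define Phi where "Phi = (\<lambda>m. (c m, y m) \<otimes>\<^bsub>amalg_dup R I\<^esub> (P m, Q m))"
  have PhiD: "Phi \<in> {..N} \<rightarrow> carrier (amalg_dup R I)"
  proof
    fix m show "Phi m \<in> carrier (amalg_dup R I)" unfolding Phi_def by (rule D.m_closed[OF xD PQc])
  qed
  have Phi_eq: "\<And>m. Phi m = (c m \<otimes> P m, y m \<otimes> Q m)" unfolding Phi_def by simp
  have "finsum R (\<lambda>m. y m \<otimes> Q m) {..N}
      = finsum R (\<lambda>m. (\<one> \<ominus> e) \<otimes> (c m \<otimes> Q m) \<oplus> e \<otimes> (d m \<otimes> Q m)) {..N}"
  proof (rule finsum_cong')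
    fix m assume "m \<in> {..N}"
    have "c m \<in> carrier R" "d m \<in> carrier R" "Q m \<in> carrier R" using cc dc Qc by auto
    thus "y m \<otimes> Q m = (\<one> \<ominus> e) \<otimes> (c m \<otimes> Q m) \<oplus> e \<otimes> (d m \<otimes> Q m)"
      unfolding y_def using ec by algebra
  qed (use cc dc Qc ec in auto)
  also have "\<dots> = finsum R (\<lambda>m. (\<one> \<ominus> e) \<otimes> (c m \<otimes> Q m)) {..N} \<oplus> finsum R (\<lambda>m. e \<otimes> (d m \<otimes> Q m)) {..N}"
    by (rule finsum_addf) (use cc dc Qc ec in auto)
  also have "\<dots> = (\<one> \<ominus> e) \<otimes> S \<oplus> e \<otimes> H"
  proof -
    have "(\<one> \<ominus> e) \<otimes> S = finsum R (\<lambda>m. (\<one> \<ominus> e) \<otimes> (c m \<otimes> Q m)) {..N}"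
      unfolding S_def by (rule finsum_rdistr) (use cc Qc ec in auto)
    moreover have "e \<otimes> H = finsum R (\<lambda>m. e \<otimes> (d m \<otimes> Q m)) {..N}"
      unfolding Hd by (rule finsum_rdistr) (use dc Qc ec in auto)
    ultimately show ?thesis by simp
  qed
  also have "\<dots> = H"
  proof -
    have Su: "S = u \<oplus> H" unfolding u_def using Sc Hc by algebra
    have eu: "e \<otimes> u = u" using ue ec uc by (simp add: m_comm)
    have "(\<one> \<ominus> e) \<otimes> S \<oplus> e \<otimes> H = u \<ominus> e \<otimes> u \<oplus> H \<otimes> \<one>" unfolding Su using ec uc Hc by algebra
    also have "\<dots> = u \<ominus> e \<otimes> u \<oplus> H" by (simp only: r_one[OF Hc])
    also have "\<dots> = u \<ominus> u \<oplus> H" unfolding eu ..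
    also have "\<dots> = H" using uc Hc by algebra
    finally show ?thesis .
  qed
  finally have sumy: "finsum R (\<lambda>m. y m \<otimes> Q m) {..N} = H" .
  have "finsum (amalg_dup R I) Phi {..N} = (E, H)"
    using D_finsum[OF _ PhiD] Ec' sumy by (simp add: Phi_eq)
  moreover have "finsum (amalg_dup R I) Phi {..N} \<in> Idl\<^bsub>amalg_dup R I\<^esub> (range (\<lambda>n. (P n, Q n)))"
  proof (rule D.ideal_finsum)
    have rs: "range (\<lambda>n. (P n, Q n)) \<subseteq> carrier (amalg_dup R I)" using PQc by auto
    show "ideal (Idl\<^bsub>amalg_dup R I\<^esub> (range (\<lambda>n. (P n, Q n)))) (amalg_dup R I)"
      by (rule D.genideal_ideal[OF rs])
    fix m
    have "(P m, Q m) \<in> Idl\<^bsub>amalg_dup R I\<^esub> (range (\<lambda>n. (P n, Q n)))"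
      using D.genideal_self[OF rs] by blast
    thus "Phi m \<in> Idl\<^bsub>amalg_dup R I\<^esub> (range (\<lambda>n. (P n, Q n)))"
      unfolding Phi_def by (rule ideal.I_l_closed[OF D.genideal_ideal[OF rs] _ xD])
  qed simp
  ultimately show "F a \<otimes>\<^bsub>amalg_dup R I\<^esub> G b \<in> content (amalg_dup R I) (F \<otimes>\<^bsub>UP (amalg_dup R I)\<^esub> G)"
    unfolding FaGb FG content_eq[OF FGup] by simp
qed

end


theorem corollary2p6:
  fixes R :: "('a, 'b) ring_scheme" and I :: "'a set"
  assumes "cring R" and "reduced_ring R" and "ideal I R" and "pure_ideal R I"
  shows "gaussian_ring R \<longleftrightarrow> gaussian_ring (amalg_dup R I)"
proof -
  have d: "dup I R" unfolding dup_def using assms(1) assms(3) by simp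
  show ?thesis using dup.dir1[OF d assms(4)] dup.dir2[OF d] by blast
qed

end
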